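(* Let $d_v\in\{2,3\}$, $L>0$, and consider $n$ particles with positions $x_p\in[0,L)$ (periodic), velocities $v_p\in\mathbb{R}^{d_v}$ and weights $w_p>0$, $p=1,\dots,n$. Let $s:[0,L)\times\mathbb{R}^{d_v}\to\mathbb{R}^{d_v}$ be an arbitrary function (a score approximation), let $\psi_\eta$ be a symmetric nonnegative spatial kernel, and define for each $p$ \[ U^\eta(x_p,v_p) = \sum_{q=1}^n w_q\,\psi_\eta(x_p-x_q)\,A(v_p-v_q)\big[s(x_p,v_p) - s(x_q,v_q)\big], \] where $A(z) = |z|^{\gamma+2}\big(I_{d_v} - zz^\top/|z|^2\big)$. Then, for any $\nu\ge 0$: (i) (conservation of momentum and energy) \[ \sum_p w_p\,U^\eta(x_p,v_p) = 0,\qquad \sum_p w_p\, v_p\cdot U^\eta(x_p,v_p) = 0; \] (ii) (estimated entropy dissipation) \[ -\nu\sum_p w_p\, s(x_p,v_p)\cdot U^\eta(x_p,v_p) \le 0. \]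
   Context: $\gamma$ is a real exponent (the Coulomb case is $\gamma=-d_v$). Terms with $v_p=v_q$ in the sum defining $U^\eta$ are taken to be zero (where $A(0)$ is undefined). The kernel $\psi_\eta$ is evaluated on periodic differences of positions and satisfies $\psi_\eta(y)=\psi_\eta(-y)\ge 0$; a typical choice is the hat function $\psi_\eta(x)=\frac1\eta\big(1-\frac{|x|}{\eta}\big)_+$ with $\eta=L/M$. *)

theory Defs
  imports "HOL-Analysis.Analysis"
begin

definition landau_A :: "real \<Rightarrow> real^'d \<Rightarrow> real^'d^'d" where
  "landau_A \<gamma> z = (norm z powr (\<gamma> + 2)) *\<^sub>R
      (mat 1 - (\<chi> i j. z $ i * z $ j / (norm z)\<^sup>2))"

definition U_eta ::
  "nat \<Rightarrow> (nat \<Rightarrow> real) \<Rightarrow> (nat \<Rightarrow> real^'d) \<Rightarrow> (nat \<Rightarrow> real)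
   \<Rightarrow> (real \<Rightarrow> real) \<Rightarrow> real \<Rightarrow> (real \<Rightarrow> real^'d \<Rightarrow> real^'d) \<Rightarrow> nat \<Rightarrow> real^'d" where
  "U_eta n x v w \<psi> \<gamma> s p =
     (\<Sum>q<n. if v p = v q then 0
             else (w q * \<psi> (x p - x q)) *\<^sub>R
                  (landau_A \<gamma> (v p - v q) *v (s (x p) (v p) - s (x q) (v q))))"

end

theory Submission
  imports Defs
begin

lemma A_mult:
  "landau_A \<gamma> z *v y = (norm z powr (\<gamma>+2)) *\<^sub>R (y - ((z \<bullet> y) / (norm z)\<^sup>2) *\<^sub>R z)"
proof -
  have "(\<Sum>j\<in>UNIV. (mat 1 - (\<chi> i j. z $ i * z $ j / (norm z)\<^sup>2)) $ i $ j * y $ j)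
     = y $ i - (z \<bullet> y) / (norm z)\<^sup>2 * z $ i" for i
  proof -
    have "(\<Sum>j\<in>UNIV. (mat 1 - (\<chi> i j. z $ i * z $ j / (norm z)\<^sup>2)) $ i $ j * y $ j)
       = (\<Sum>j\<in>UNIV. (if i = j then y $ j else 0) - z $ i * z $ j * y $ j / (norm z)\<^sup>2)"
      by (intro sum.cong) (auto simp: mat_def algebra_simps)
    also have "\<dots> = y $ i - (\<Sum>j\<in>UNIV. z $ i * z $ j * y $ j / (norm z)\<^sup>2)"
      by (simp add: sum_subtractf)
    also have "(\<Sum>j\<in>UNIV. z $ i * z $ j * y $ j / (norm z)\<^sup>2) = (\<Sum>j\<in>UNIV. z $ i * (z $ j * y $ j)) / (norm z)\<^sup>2"
      by (simp add: sum_divide_distrib mult.assoc)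
    also have "\<dots> = (\<Sum>j\<in>UNIV. z $ j * y $ j) * z $ i / (norm z)\<^sup>2"
      by (simp add: sum_distrib_left[symmetric] mult.commute)
    finally show ?thesis by (simp add: inner_vec_def)
  qed
  note X = this
  have "(landau_A \<gamma> z *v y) $ i = norm z powr (\<gamma>+2) * (\<Sum>j\<in>UNIV. (mat 1 - (\<chi> i j. z $ i * z $ j / (norm z)\<^sup>2)) $ i $ j * y $ j)" for i
    unfolding landau_A_def matrix_vector_mult_def
    by (simp only: vec_lambda_beta vector_scaleR_component real_scaleR_def sum_distrib_left mult.assoc)
  note Y = this
  show ?thesis
  proof (rule vec_eq_iff[THEN iffD2], rule allI)
    fix i
    show "(landau_A \<gamma> z *v y) $ i = (norm z powr (\<gamma>+2) *\<^sub>R (y - (z \<bullet> y / (norm z)\<^sup>2) *\<^sub>R z)) $ i"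
      unfolding Y X by (simp add: algebra_simps)
  qed
qed

lemma A_neg: "landau_A \<gamma> (- z) *v y = landau_A \<gamma> z *v y"
  by (simp add: A_mult)

lemma A_lin_neg: "landau_A \<gamma> z *v (- y) = - (landau_A \<gamma> z *v y)"
  by (simp add: A_mult algebra_simps)

lemma A_null: "z \<noteq> 0 \<Longrightarrow> z \<bullet> (landau_A \<gamma> z *v y) = 0"
  by (simp add: A_mult inner_diff_right power2_norm_eq_inner)

lemma A_psd: "y \<bullet> (landau_A \<gamma> z *v y) \<ge> 0"
proof (cases "z = 0")
  case True then show ?thesis by (simp add: A_mult)
next
  case False
  have cs: "(z \<bullet> y)\<^sup>2 \<le> (norm z)\<^sup>2 * (norm y)\<^sup>2"
  proof -
    have "\<bar>z \<bullet> y\<bar> \<le> norm z * norm y" by (rule Cauchy_Schwarz_ineq2)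
    then have "\<bar>z \<bullet> y\<bar>\<^sup>2 \<le> (norm z * norm y)\<^sup>2" by (rule power_mono) simp
    then show ?thesis by (simp add: power_mult_distrib)
  qed
  have nz: "(norm z)\<^sup>2 > 0" using False by simp
  have "(z \<bullet> y)\<^sup>2 / (norm z)\<^sup>2 \<le> (norm y)\<^sup>2"
    using cs nz by (simp add: divide_le_eq mult.commute)
  moreover have "(norm y)\<^sup>2 = y \<bullet> y" by (rule power2_norm_eq_inner)
  ultimately have "0 \<le> y \<bullet> y - (z \<bullet> y) * (z \<bullet> y) / (norm z)\<^sup>2"
    by (simp add: power2_eq_square)
  then show ?thesis
    by (simp add: A_mult inner_diff_right inner_commute)
qed

lemma sum_antisym:
  fixes f :: "nat \<Rightarrow> nat \<Rightarrow> 'a::real_vector"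
  assumes "\<And>p q. f q p = - f p q"
  shows "(\<Sum>p\<in>I. \<Sum>q\<in>I. f p q) = 0"
proof -
  let ?S = "(\<Sum>p\<in>I. \<Sum>q\<in>I. f p q)"
  have "?S = (\<Sum>q\<in>I. \<Sum>p\<in>I. f p q)" by (rule sum.swap)
  also have "\<dots> = (\<Sum>q\<in>I. \<Sum>p\<in>I. - f q p)"
    by (intro sum.cong refl) (rule assms)
  also have "\<dots> = - ?S" by (simp only: sum_negf)
  finally have "?S = - ?S" .
  then have "?S + ?S = 0" by (metis add.right_inverse)
  then have "2 *\<^sub>R ?S = 0" by (simp add: scaleR_2)
  then show ?thesis by simp
qed

lemma sum_sym_half:
  fixes f :: "nat \<Rightarrow> nat \<Rightarrow> real"
  shows "(\<Sum>p\<in>I. \<Sum>q\<in>I. f p q) = (\<Sum>p\<in>I. \<Sum>q\<in>I. (f p q + f q p) / 2)"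
proof -
  have "(\<Sum>q\<in>I. \<Sum>p\<in>I. f p q) = (\<Sum>p\<in>I. \<Sum>q\<in>I. f p q)" by (rule sum.swap)
  then show ?thesis
    by (simp add: sum.distrib add_divide_distrib sum_divide_distrib[symmetric])
qed

theorem theorem3:
  fixes n :: nat and L \<gamma> \<nu> :: real
    and x :: "nat \<Rightarrow> real" and v :: "nat \<Rightarrow> real^'d" and w :: "nat \<Rightarrow> real"
    and \<psi> :: "real \<Rightarrow> real" and s :: "real \<Rightarrow> real^'d \<Rightarrow> real^'d"
  assumes dim: "CARD('d) = 2 \<or> CARD('d) = 3"
    and L_pos: "L > 0"
    and x_range: "\<And>p. p < n \<Longrightarrow> 0 \<le> x p \<and> x p < L"
    and w_pos: "\<And>p. p < n \<Longrightarrow> w p > 0"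
    and psi_sym: "\<And>y. \<psi> y = \<psi> (- y)"
    and psi_nonneg: "\<And>y. \<psi> y \<ge> 0"
    and nu_nonneg: "\<nu> \<ge> 0"
  shows "(\<Sum>p<n. w p *\<^sub>R U_eta n x v w \<psi> \<gamma> s p) = 0
       \<and> (\<Sum>p<n. w p * (v p \<bullet> U_eta n x v w \<psi> \<gamma> s p)) = 0
       \<and> - \<nu> * (\<Sum>p<n. w p * (s (x p) (v p) \<bullet> U_eta n x v w \<psi> \<gamma> s p)) \<le> 0"
proof -
  define c where "c p q = w p * (w q * \<psi> (x p - x q))" for p q
  define D where "D p q = s (x p) (v p) - s (x q) (v q)" for p q
  define F where "F p q = (if v p = v q then 0 else
     c p q *\<^sub>R (landau_A \<gamma> (v p - v q) *v D p q))" for p q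
  have csym: "c q p = c p q" for p q
    unfolding c_def using psi_sym[of "x p - x q"] by (simp add: algebra_simps)
  have Fanti: "F q p = - F p q" for p q
  proof -
    have "v q - v p = - (v p - v q)" by simp
    moreover have "D q p = - D p q" unfolding D_def by simp
    ultimately have "landau_A \<gamma> (v q - v p) *v D q p = - (landau_A \<gamma> (v p - v q) *v D p q)"
      by (metis A_neg A_lin_neg)
    then show ?thesis unfolding F_def
      by (simp add: csym eq_commute[of "v q" "v p"])
  qed
  have U: "w p *\<^sub>R U_eta n x v w \<psi> \<gamma> s p = (\<Sum>q<n. F p q)" for p
    unfolding U_eta_def F_def c_def D_def scaleR_sum_right
    by (intro sum.cong refl) simp
  have U2: "w p * (y \<bullet> U_eta n x v w \<psi> \<gamma> s p) = (\<Sum>q<n. y \<bullet> F p q)" for p y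
  proof -
    have "w p * (y \<bullet> U_eta n x v w \<psi> \<gamma> s p) = y \<bullet> (w p *\<^sub>R U_eta n x v w \<psi> \<gamma> s p)"
      by simp
    then show ?thesis by (simp add: U inner_sum_right)
  qed
  have P1: "(\<Sum>p<n. w p *\<^sub>R U_eta n x v w \<psi> \<gamma> s p) = 0"
    using sum_antisym[of F, OF Fanti] by (simp add: U)
  have P2: "(\<Sum>p<n. w p * (v p \<bullet> U_eta n x v w \<psi> \<gamma> s p)) = 0"
  proof -
    have "(\<Sum>p<n. w p * (v p \<bullet> U_eta n x v w \<psi> \<gamma> s p)) = (\<Sum>p<n. \<Sum>q<n. v p \<bullet> F p q)"
      by (rule sum.cong[OF refl U2])
    also have "\<dots> = (\<Sum>p<n. \<Sum>q<n. (v p \<bullet> F p q + v q \<bullet> F q p) / 2)"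
      by (rule sum_sym_half)
    also have "\<dots> = 0"
    proof (intro sum.neutral ballI)
      fix p q
      have "v p \<bullet> F p q + v q \<bullet> F q p = (v p - v q) \<bullet> F p q"
        by (simp add: Fanti[of p q] inner_diff_left)
      also have "\<dots> = 0"
        unfolding F_def by (simp add: A_null)
      finally show "(v p \<bullet> F p q + v q \<bullet> F q p) / 2 = 0"
        by simp
    qed
    finally show ?thesis .
  qed
  have P3: "(\<Sum>p<n. w p * (s (x p) (v p) \<bullet> U_eta n x v w \<psi> \<gamma> s p)) \<ge> 0"
  proof -
    have "(\<Sum>p<n. w p * (s (x p) (v p) \<bullet> U_eta n x v w \<psi> \<gamma> s p))
        = (\<Sum>p<n. \<Sum>q<n. s (x p) (v p) \<bullet> F p q)"
      by (rule sum.cong[OF refl U2])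
    also have "\<dots> = (\<Sum>p<n. \<Sum>q<n. (s (x p) (v p) \<bullet> F p q + s (x q) (v q) \<bullet> F q p) / 2)"
      by (rule sum_sym_half)
    also have "\<dots> \<ge> 0"
    proof (intro sum_nonneg)
      fix p q assume pq: "p \<in> {..<n}" "q \<in> {..<n}"
      have "s (x p) (v p) \<bullet> F p q + s (x q) (v q) \<bullet> F q p = D p q \<bullet> F p q"
        unfolding Fanti[of p q] D_def by (simp add: inner_diff_left)
      also have "\<dots> \<ge> 0"
      proof -
        have "c p q \<ge> 0" unfolding c_def using w_pos pq psi_nonneg
          by (simp add: less_imp_le)
        then show ?thesis unfolding F_def using A_psd[of "D p q" \<gamma> "v p - v q"] by (simp add: mult_nonneg_nonneg)
      qed
      finally show "(s (x p) (v p) \<bullet> F p q + s (x q) (v q) \<bullet> F q p) / 2 \<ge> 0" by simp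
    qed
    finally show ?thesis .
  qed
  show ?thesis using P1 P2 P3 nu_nonneg
    by (simp add: mult_nonneg_nonneg)
qed

end
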